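(* Let $C\in\mathbb{R}$ with $C\le 3$ and a map $\alpha\colon\,]0,\infty[\,\to\,]0,\infty[$, $\lambda\mapsto\alpha_\lambda$, be such that: for every $\lambda>0$, every real-valued strong solution $Z^\lambda$ of $\mathrm dZ^\lambda_t=-\lambda Z^\lambda_t\,\mathrm dt+\mathrm dW_t$, $Z^\lambda_0=0$ ($W$ a one-dimensional standard Brownian motion), and every Borel measurable $b\colon[0,1]\times\mathbb{R}\to H$ twice continuously differentiable in the second variable with $\sup_{t,x}|b(t,x)|_H\le 1$, one has $\mathbb{E}\exp\big(\alpha_\lambda|\int_0^1 b'(t,Z^\lambda_t)\,\mathrm dt|_H^2\big)\le C$ (with $b'$ the derivative in the second variable). Then for every Borel measurable function $b\colon[0,1]\times H\to H$ which is twice continuously differentiable in the second variable and satisfies $\|b\|_\infty:=\sup_{t\in[0,1],x\in H}|b(t,x)|_H\leq 1$, we have \[ \mathbb{E}\exp\left(\alpha_{\lambda_i}\left|\int_0^1\partial_{x_i}b(t,Z^A_t)\,\mathrm dt\right|_H^2\right)\leq C\leq 3\qquad\text{for all } i\in\mathbb{N}, \] where $\partial_{x_i}b$ denotes the derivative of $b$ with respect to the $i$-th coordinate $x_i=\langle x,e_i\rangle$ of the second variable.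
   Context: $H$ is a separable real Hilbert space with orthonormal basis $(e_n)_{n\in\mathbb{N}}$, identified with $\ell^2\subseteq\mathbb{R}^{\mathbb{N}}$ via this basis. $(\Omega,\mathcal F,(\mathcal F_t)_{t\ge0},\mathbb P)$ is a filtered probability space with right-continuous normal filtration carrying a cylindrical $\mathcal F_t$-Brownian motion $B=(B^{(n)})_{n\in\mathbb{N}}$ with values in $\mathbb{R}^{\mathbb{N}}$ (independent standard one-dimensional Brownian motions). $A\colon D(A)\to H$ is a positive definite, self-adjoint, closed, densely defined operator with $A^{-1}$ trace class and $Ae_n=\lambda_n e_n$, $\lambda_n>0$ for all $n$. $Z^A$ is the $H$-valued Ornstein–Uhlenbeck process with continuous paths, the strong solution of $\mathrm dZ^A_t=-AZ^A_t\,\mathrm dt+\mathrm dB_t$, $Z^A_0=0$. *)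

theory Defs
  imports "HOL-Analysis.Analysis" "HOL-Probability.Probability"
begin

definition filtration_on :: "'w measure \<Rightarrow> (real \<Rightarrow> 'w measure) \<Rightarrow> bool" where
  "filtration_on M F \<longleftrightarrow>
     (\<forall>t. subalgebra M (F t)) \<and> (\<forall>s t. 0 \<le> s \<longrightarrow> s \<le> t \<longrightarrow> sets (F s) \<subseteq> sets (F t))"

definition usual_conditions :: "'w measure \<Rightarrow> (real \<Rightarrow> 'w measure) \<Rightarrow> bool" where
  "usual_conditions M F \<longleftrightarrow>
     (\<forall>t\<ge>0. sets (F t) = (\<Inter>s\<in>{t<..}. sets (F s))) \<and>
     (\<forall>A. A \<subseteq> space M \<longrightarrow> (\<exists>N\<in>sets M. A \<subseteq> N \<and> emeasure M N = 0) \<longrightarrow> A \<in> sets (F 0))"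

definition adapted :: "(real \<Rightarrow> 'w measure) \<Rightarrow> (real \<Rightarrow> 'w \<Rightarrow> 'b::topological_space) \<Rightarrow> bool" where
  "adapted F X \<longleftrightarrow> (\<forall>t\<ge>0. X t \<in> borel_measurable (F t))"

definition std_BM :: "'w measure \<Rightarrow> (real \<Rightarrow> 'w measure) \<Rightarrow> (real \<Rightarrow> 'w \<Rightarrow> real) \<Rightarrow> bool" where
  "std_BM M F W \<longleftrightarrow>
     adapted F W \<and>
     (\<forall>\<omega>\<in>space M. W 0 \<omega> = 0 \<and> continuous_on {0..} (\<lambda>t. W t \<omega>)) \<and>
     (\<forall>s t. 0 \<le> s \<longrightarrow> s < t \<longrightarrow>
        distributed M lborel (\<lambda>\<omega>. W t \<omega> - W s \<omega>) (\<lambda>x. ennreal (normal_density 0 (sqrt (t - s)) x)) \<and>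
        prob_space.indep_set M (sets (F s))
          {(\<lambda>\<omega>. W t \<omega> - W s \<omega>) -` A \<inter> space M | A. A \<in> sets borel})"

definition cyl_BM :: "'w measure \<Rightarrow> (real \<Rightarrow> 'w measure) \<Rightarrow> (nat \<Rightarrow> real \<Rightarrow> 'w \<Rightarrow> real) \<Rightarrow> bool" where
  "cyl_BM M F B \<longleftrightarrow>
     (\<forall>n. std_BM M F (B n)) \<and>
     prob_space.indep_vars M (\<lambda>_. Pi\<^sub>M {0..} (\<lambda>_. borel))
        (\<lambda>n \<omega>. restrict (\<lambda>t. B n t \<omega>) {0..}) UNIV"

definition OU_solution :: "'w measure \<Rightarrow> (real \<Rightarrow> 'w measure) \<Rightarrow> real \<Rightarrow>
    (real \<Rightarrow> 'w \<Rightarrow> real) \<Rightarrow> (real \<Rightarrow> 'w \<Rightarrow> real) \<Rightarrow> bool" where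
  "OU_solution M F lam W Z \<longleftrightarrow>
     adapted F Z \<and> (\<forall>\<omega>\<in>space M. continuous_on {0..} (\<lambda>t. Z t \<omega>)) \<and>
     (AE \<omega> in M. \<forall>t\<ge>0. Z t \<omega> = - lam * (LINT s:{0..t}|lborel. Z s \<omega>) + W t \<omega>)"

text \<open>H-valued Ornstein-Uhlenbeck process: strong solution of dZ = -A Z dt + dB, Z 0 = 0,
  where A e n = lam n * e n; written coordinatewise w.r.t. the orthonormal basis e.\<close>
definition OU_H_solution :: "'w measure \<Rightarrow> (real \<Rightarrow> 'w measure) \<Rightarrow> (nat \<Rightarrow> 'h::real_inner) \<Rightarrow>
    (nat \<Rightarrow> real) \<Rightarrow> (nat \<Rightarrow> real \<Rightarrow> 'w \<Rightarrow> real) \<Rightarrow> (real \<Rightarrow> 'w \<Rightarrow> 'h) \<Rightarrow> bool" where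
  "OU_H_solution M F e lam B Z \<longleftrightarrow>
     adapted F Z \<and> (\<forall>\<omega>\<in>space M. continuous_on {0..} (\<lambda>t. Z t \<omega>)) \<and>
     (\<forall>n. AE \<omega> in M. \<forall>t\<ge>0.
        Z t \<omega> \<bullet> e n = - lam n * (LINT s:{0..t}|lborel. Z s \<omega> \<bullet> e n) + B n t \<omega>)"

definition C2 :: "('a::real_normed_vector \<Rightarrow> 'b::real_normed_vector) \<Rightarrow> bool" where
  "C2 f \<longleftrightarrow> (\<exists>f' f''.
      (\<forall>x. (f has_derivative blinfun_apply (f' x)) (at x)) \<and>
      (\<forall>x. (f' has_derivative blinfun_apply (f'' x)) (at x)) \<and>
      continuous_on UNIV f'')"

definition admissible_drift :: "(real \<Rightarrow> 'x::real_normed_vector \<Rightarrow> 'h::real_normed_vector) \<Rightarrow> bool" where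
  "admissible_drift b \<longleftrightarrow>
     (\<lambda>p. b (fst p) (snd p)) \<in> borel_measurable (restrict_space borel ({0..1} \<times> UNIV)) \<and>
     (\<forall>t\<in>{0..1}. C2 (b t)) \<and>
     (\<forall>t\<in>{0..1}. \<forall>x. norm (b t x) \<le> 1)"

end

theory Submission
  imports Defs
begin


lemma onb_sum_inner:
  fixes e :: "nat \<Rightarrow> 'h::real_inner"
  assumes orth: "\<And>i j. e i \<bullet> e j = (if i = j then 1 else 0)"
    and "finite A" "finite B"
  shows "(\<Sum>j\<in>A. c j *\<^sub>R e j) \<bullet> (\<Sum>k\<in>B. d k *\<^sub>R e k) = (\<Sum>j\<in>A\<inter>B. c j * d j)"
proof -
  have "(\<Sum>j\<in>A. c j *\<^sub>R e j) \<bullet> (\<Sum>k\<in>B. d k *\<^sub>R e k) = (\<Sum>j\<in>A. c j * (e j \<bullet> (\<Sum>k\<in>B. d k *\<^sub>R e k)))"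
    by (simp add: inner_sum_left)
  also have "\<dots> = (\<Sum>j\<in>A. \<Sum>k\<in>B. c j * d k * (if j = k then 1 else 0))"
    by (simp add: inner_sum_right orth sum_distrib_left mult_ac)
  also have "\<dots> = (\<Sum>j\<in>A. if j \<in> B then c j * d j else 0)"
    using assms(3) by (intro sum.cong refl) (simp add: sum.delta if_distrib cong: if_cong)
  also have "\<dots> = (\<Sum>j\<in>A\<inter>B. c j * d j)"
    using assms(2) by (simp add: sum.inter_restrict)
  finally show ?thesis .
qed

lemma onb_expansion:
  fixes e :: "nat \<Rightarrow> 'h::{real_inner,banach}"
  assumes orth: "\<And>i j. e i \<bullet> e j = (if i = j then 1 else 0)"
    and total: "closure (span (range e)) = UNIV"
  shows "(\<lambda>n. \<Sum>j<n. (x \<bullet> e j) *\<^sub>R e j) \<longlonglongrightarrow> x"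
proof -
  define c where "c j = x \<bullet> e j" for j
  define s where "s n = (\<Sum>j<n. c j *\<^sub>R e j)" for n
  have se: "s n \<bullet> e k = (if k < n then c k else 0)" for n k
  proof -
    have "s n \<bullet> e k = s n \<bullet> (\<Sum>j\<in>{k}. 1 *\<^sub>R e j)" by simp
    also have "\<dots> = (\<Sum>j\<in>{..<n}\<inter>{k}. c j * 1)"
      unfolding s_def by (rule onb_sum_inner[OF orth]) auto
    finally show ?thesis by auto
  qed
  have xs: "x \<bullet> s n = (\<Sum>j<n. (c j)\<^sup>2)" for n
    unfolding s_def by (simp add: inner_sum_right c_def power2_eq_square)
  have ss: "s n \<bullet> s n = (\<Sum>j<n. (c j)\<^sup>2)" for n
    unfolding s_def by (subst onb_sum_inner[OF orth]) (auto simp: power2_eq_square)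
  have bnd: "(\<Sum>j<n. (c j)\<^sup>2) \<le> x \<bullet> x" for n
  proof -
    have "0 \<le> (x - s n) \<bullet> (x - s n)" by simp
    also have "\<dots> = x \<bullet> x - (\<Sum>j<n. (c j)\<^sup>2)"
      by (simp add: inner_diff_left inner_diff_right xs ss inner_commute)
    finally show ?thesis by simp
  qed
  have summ: "summable (\<lambda>j. (c j)\<^sup>2)"
    by (rule summableI_nonneg_bounded[where x="x \<bullet> x"]) (auto intro: bnd)
  have diff: "norm (s m - s n) ^ 2 = (\<Sum>j\<in>{n..<m}. (c j)\<^sup>2)" if "n \<le> m" for m n
  proof -
    have U: "{..<m} = {..<n} \<union> {n..<m}" using that by auto
    have "s m = s n + (\<Sum>j\<in>{n..<m}. c j *\<^sub>R e j)"
      unfolding s_def by (subst U, subst sum.union_disjoint) auto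
    then have "s m - s n = (\<Sum>j\<in>{n..<m}. c j *\<^sub>R e j)" by simp
    then have "norm (s m - s n) ^ 2 = (\<Sum>j\<in>{n..<m}. c j *\<^sub>R e j) \<bullet> (\<Sum>j\<in>{n..<m}. c j *\<^sub>R e j)"
      by (simp add: power2_norm_eq_inner)
    also have "\<dots> = (\<Sum>j\<in>{n..<m}. (c j)\<^sup>2)"
      by (subst onb_sum_inner[OF orth]) (auto simp: power2_eq_square)
    finally show ?thesis .
  qed
  have "Cauchy s"
  proof (rule metric_CauchyI)
    fix \<epsilon> :: real assume "\<epsilon> > 0"
    then have "\<epsilon>^2 > 0" by simp
    from summable_Cauchy[THEN iffD1, OF summ, rule_format, OF this]
    obtain N where N: "\<And>m n. N \<le> m \<Longrightarrow> norm (\<Sum>k = m..<n. (c k)\<^sup>2) < \<epsilon>^2" by blast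
    have "dist (s m) (s n) < \<epsilon>" if "N \<le> m" "N \<le> n" for m n
    proof -
      have "norm (s m - s n) ^ 2 < \<epsilon> ^ 2"
      proof (cases "n \<le> m")
        case True
        have "norm (s m - s n) ^ 2 = (\<Sum>j\<in>{n..<m}. (c j)\<^sup>2)" by (rule diff[OF True])
        also have "\<dots> \<le> norm (\<Sum>j\<in>{n..<m}. (c j)\<^sup>2)" by simp
        also have "\<dots> < \<epsilon>^2" using N that by blast
        finally show ?thesis .
      next
        case False
        have "norm (s m - s n) ^ 2 = norm (s n - s m) ^ 2" by (simp add: norm_minus_commute)
        also have "\<dots> = (\<Sum>j\<in>{m..<n}. (c j)\<^sup>2)" using False by (intro diff) simp
        also have "\<dots> \<le> norm (\<Sum>j\<in>{m..<n}. (c j)\<^sup>2)" by simp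
        also have "\<dots> < \<epsilon>^2" using N that by blast
        finally show ?thesis .
      qed
      then have "norm (s m - s n) < \<epsilon>"
        using \<open>\<epsilon> > 0\<close> by (meson norm_ge_zero power_less_imp_less_base less_le_not_le)
      then show ?thesis by (simp add: dist_norm)
    qed
    then show "\<exists>M. \<forall>m\<ge>M. \<forall>n\<ge>M. dist (s m) (s n) < \<epsilon>" by blast
  qed
  then obtain y where y: "s \<longlonglongrightarrow> y" using Cauchy_convergent_iff convergent_def by blast
  have ye: "y \<bullet> e k = c k" for k
  proof -
    have "(\<lambda>n. s n \<bullet> e k) \<longlonglongrightarrow> y \<bullet> e k" by (intro tendsto_intros y)
    moreover have "eventually (\<lambda>n. s n \<bullet> e k = c k) sequentially"
      using eventually_gt_at_top[of k] by eventually_elim (simp add: se)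
    then have "(\<lambda>n. s n \<bullet> e k) \<longlonglongrightarrow> c k" by (rule tendsto_eventually)
    ultimately show ?thesis by (rule LIMSEQ_unique)
  qed
  define d where "d = x - y"
  have "d \<bullet> e k = 0" for k by (simp add: d_def inner_diff_left ye c_def)
  then have "d \<bullet> z = 0" if "z \<in> span (range e)" for z
    using orthogonal_to_span[OF that, of d] by (auto simp: orthogonal_def)
  then have "span (range e) \<subseteq> {z. d \<bullet> z = 0}" by blast
  moreover have "closed {z. d \<bullet> z = 0}"
    by (intro closed_Collect_eq continuous_intros)
  ultimately have "closure (span (range e)) \<subseteq> {z. d \<bullet> z = 0}"
    by (rule closure_minimal)
  then have "d \<in> {z. d \<bullet> z = 0}" using total by blast
  then have "d \<bullet> d = 0" by simp
  then have "x = y" by (simp add: d_def)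
  then show ?thesis using y unfolding s_def c_def by simp
qed



lemma lint_Icc_eq_integral:
  fixes f :: "real \<Rightarrow> real"
  assumes "continuous_on {a..b} f"
  shows "(LINT s:{a..b}|lborel. f s) = integral {a..b} f"
  using set_borel_integral_eq_integral(2)[OF borel_integrable_atLeastAtMost'[OF assms]] .

lemma ode_explicit:
  fixes x w :: "real \<Rightarrow> real" and l :: real
  assumes cx: "continuous_on {0..} x" and cw: "continuous_on {0..} w"
    and eq: "\<forall>t\<ge>0. x t = - l * (LINT s:{0..t}|lborel. x s) + w t"
    and T: "T \<ge> 0"
  shows "x T = w T - l * exp (- l * T) * (LINT s:{0..T}|lborel. exp (l * s) * w s)"
proof -
  have cx': "continuous_on {0..T} x" by (rule continuous_on_subset[OF cx]) auto
  have cw': "continuous_on {0..T} (\<lambda>s. exp (l * s) * w s)"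
    by (intro continuous_intros continuous_on_subset[OF cw]) auto
  define u where "u t = integral {0..t} x" for t
  define I where "I t = integral {0..t} (\<lambda>s. exp (l * s) * w s)" for t
  define v where "v t = exp (l * t) * u t - I t" for t
  have xu: "x t = - l * u t + w t" if "t \<in> {0..T}" for t
  proof -
    have "continuous_on {0..t} x" by (rule continuous_on_subset[OF cx]) (use that in auto)
    then show ?thesis using eq that unfolding u_def by (simp add: lint_Icc_eq_integral)
  qed
  have "(v has_field_derivative 0) (at t within {0..T})" if t: "t \<in> {0..T}" for t
  proof -
    have du: "(u has_field_derivative x t) (at t within {0..T})"
      unfolding u_def by (rule integral_has_real_derivative[OF cx' t])
    have dI: "(I has_field_derivative exp (l * t) * w t) (at t within {0..T})"
      unfolding I_def by (rule integral_has_real_derivative[OF cw' t])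
    have de: "((\<lambda>z. exp (l * z)) has_field_derivative exp (l * t) * l) (at t within {0..T})"
      by (auto intro!: derivative_eq_intros)
    have "(v has_field_derivative (exp (l * t) * l * u t + x t * exp (l * t) - exp (l * t) * w t)) (at t within {0..T})"
      unfolding v_def
      by (intro DERIV_diff DERIV_mult de du dI)
    moreover have "exp (l * t) * l * u t + x t * exp (l * t) - exp (l * t) * w t = 0"
    proof -
      have h: "x t = w t - l * u t" using xu[OF t] by simp
      show ?thesis unfolding h by (simp add: algebra_simps)
    qed
    ultimately show ?thesis by simp
  qed
  then obtain c where c: "\<forall>t\<in>{0..T}. v t = c"
    using has_field_derivative_zero_constant[of "{0..T}" v] by auto
  have "v 0 = 0" by (simp add: v_def u_def I_def)
  then have "v T = 0" using c T by auto
  then have "u T = exp (- l * T) * I T"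
    by (simp add: v_def exp_minus field_simps)
  moreover have "I T = (LINT s:{0..T}|lborel. exp (l * s) * w s)"
    unfolding I_def by (rule lint_Icc_eq_integral[OF cw', symmetric])
  ultimately show ?thesis using xu[of T] T by simp
qed



lemma floor_approx_lim:
  fixes s :: real
  shows "(\<lambda>n. real_of_int \<lfloor>real (Suc n) * s\<rfloor> / real (Suc n)) \<longlonglongrightarrow> s"
proof (rule tendsto_sandwich[of "\<lambda>n. s - inverse (real (Suc n))" _ _ "\<lambda>n. s"])
  show "\<forall>\<^sub>F n in sequentially. s - inverse (real (Suc n)) \<le> real_of_int \<lfloor>real (Suc n) * s\<rfloor> / real (Suc n)"
  proof (intro always_eventually allI)
    fix n
    have a: "real (Suc n) * s - 1 \<le> real_of_int \<lfloor>real (Suc n) * s\<rfloor>" by linarith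
    have "s - inverse (real (Suc n)) = (real (Suc n) * s - 1) / real (Suc n)"
      by (simp add: field_simps del: of_nat_Suc)
    then show "s - inverse (real (Suc n)) \<le> real_of_int \<lfloor>real (Suc n) * s\<rfloor> / real (Suc n)"
      using divide_right_mono[OF a, of "real (Suc n)"] by simp
  qed
  show "\<forall>\<^sub>F n in sequentially. real_of_int \<lfloor>real (Suc n) * s\<rfloor> / real (Suc n) \<le> s"
  proof (intro always_eventually allI)
    fix n
    have a: "real_of_int \<lfloor>real (Suc n) * s\<rfloor> \<le> real (Suc n) * s" by linarith
    have "(real (Suc n) * s) / real (Suc n) = s" by (simp del: of_nat_Suc)
    then show "real_of_int \<lfloor>real (Suc n) * s\<rfloor> / real (Suc n) \<le> s"
      using divide_right_mono[OF a, of "real (Suc n)"] by simp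
  qed
  show "(\<lambda>n. s - inverse (real (Suc n))) \<longlonglongrightarrow> s"
    using tendsto_diff[OF tendsto_const LIMSEQ_inverse_real_of_nat, of s] by simp
qed simp

lemma carath_measurable:
  fixes X :: "real \<Rightarrow> 'a \<Rightarrow> 'b::metric_space"
  assumes cont: "\<And>\<omega>. \<omega> \<in> space N \<Longrightarrow> continuous_on {0..} (\<lambda>s. X s \<omega>)"
    and meas: "\<And>s. s \<ge> 0 \<Longrightarrow> X s \<in> borel_measurable N"
  shows "(\<lambda>p. X (max 0 (snd p)) (fst p)) \<in> borel_measurable (N \<Otimes>\<^sub>M lborel)"
proof (rule borel_measurable_LIMSEQ_metric)
  define g where "g n s = max 0 (real_of_int \<lfloor>real (Suc n) * s\<rfloor> / real (Suc n))" for n s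
  show "(\<lambda>p::'a\<times>real. X (g n (snd p)) (fst p)) \<in> borel_measurable (N \<Otimes>\<^sub>M lborel)" for n
  proof -
    have f: "(\<lambda>p::'a\<times>real. X (max 0 (real_of_int k / real (Suc n))) (fst p)) \<in> borel_measurable (N \<Otimes>\<^sub>M lborel)" for k :: int
      by (rule measurable_compose[OF measurable_fst meas]) simp
    have h: "(\<lambda>p::'a\<times>real. \<lfloor>real (Suc n) * snd p\<rfloor>) \<in> measurable (N \<Otimes>\<^sub>M lborel) (count_space UNIV)"
      by (rule measurable_compose[OF _ measurable_real_floor]) measurable
    show ?thesis
      using measurable_compose_countable[OF f h] unfolding g_def by simp
  qed
  fix p :: "'a\<times>real" assume "p \<in> space (N \<Otimes>\<^sub>M lborel)"
  then have "fst p \<in> space N" by (auto simp: space_pair_measure)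
  show "(\<lambda>n. X (g n (snd p)) (fst p)) \<longlonglongrightarrow> X (max 0 (snd p)) (fst p)"
  proof (rule continuous_on_tendsto_compose[OF cont[OF \<open>fst p \<in> space N\<close>]])
    show "(\<lambda>n. g n (snd p)) \<longlonglongrightarrow> max 0 (snd p)"
      unfolding g_def by (intro tendsto_max tendsto_const floor_approx_lim)
  qed (auto simp: g_def)
qed



lemma (in prob_space) diag_bound:
  assumes S: "sets S \<subseteq> sets M" "space S = space M"
    and T: "sets T \<subseteq> sets M" "space T = space M"
    and ind: "indep_set (sets S) (sets T)"
    and f: "f \<in> borel_measurable (S \<Otimes>\<^sub>M T)"
    and bnd: "\<And>y. y \<in> space M \<Longrightarrow> (\<integral>\<^sup>+x. f (x, y) \<partial>M) \<le> c"
  shows "(\<integral>\<^sup>+x. f (x, x) \<partial>M) \<le> c"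
proof -
  have idS: "(\<lambda>x. x) \<in> measurable M S"
    by (rule measurableI) (use S sets.sets_into_space in auto)
  have idT: "(\<lambda>x. x) \<in> measurable M T"
    by (rule measurableI) (use T sets.sets_into_space in auto)
  have eS: "{(\<lambda>x. x) -` A \<inter> space M | A. A \<in> sets S} = sets S"
    using S sets.sets_into_space[of _ S] by (auto intro!: exI)
  have eT: "{(\<lambda>x. x) -` A \<inter> space M | A. A \<in> sets T} = sets T"
    using T sets.sets_into_space[of _ T] by (auto intro!: exI)
  have "indep_var S (\<lambda>x. x) T (\<lambda>x. x)"
    unfolding indep_var_eq eS eT
    using idS idT ind S(2) T(2) sets.sigma_sets_eq[of S] sets.sigma_sets_eq[of T] by simp
  then have D: "distr M S (\<lambda>x. x) \<Otimes>\<^sub>M distr M T (\<lambda>x. x) = distr M (S \<Otimes>\<^sub>M T) (\<lambda>x. (x, x))"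
    using indep_var_distribution_eq by blast
  interpret PS: prob_space "distr M S (\<lambda>x. x)" by (rule prob_space_distr[OF idS])
  interpret PT: prob_space "distr M T (\<lambda>x. x)" by (rule prob_space_distr[OF idT])
  interpret PST: pair_prob_space "distr M S (\<lambda>x. x)" "distr M T (\<lambda>x. x)" ..
  have diag: "(\<lambda>x. (x, x)) \<in> measurable M (S \<Otimes>\<^sub>M T)"
    using idS idT by (rule measurable_Pair)
  have "(\<integral>\<^sup>+x. f (x, x) \<partial>M) = (\<integral>\<^sup>+p. f p \<partial>distr M (S \<Otimes>\<^sub>M T) (\<lambda>x. (x, x)))"
    by (subst nn_integral_distr[OF diag]) (simp_all add: f)
  also have "\<dots> = (\<integral>\<^sup>+p. f p \<partial>(distr M S (\<lambda>x. x) \<Otimes>\<^sub>M distr M T (\<lambda>x. x)))"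
    by (simp add: D)
  also have "\<dots> = (\<integral>\<^sup>+y. (\<integral>\<^sup>+x. f (x, y) \<partial>distr M S (\<lambda>x. x)) \<partial>distr M T (\<lambda>x. x))"
    by (rule PST.nn_integral_snd[symmetric]) (simp add: f cong: measurable_cong_sets)
  also have "\<dots> \<le> (\<integral>\<^sup>+y. c \<partial>distr M T (\<lambda>x. x))"
  proof (rule nn_integral_mono)
    fix y assume "y \<in> space (distr M T (\<lambda>x. x))"
    then have y: "y \<in> space M" using T by simp
    then have yT: "y \<in> space T" using T by simp
    have fy: "(\<lambda>x. f (x, y)) \<in> borel_measurable S"
      by (rule measurable_compose[OF _ f], rule measurable_Pair) (use yT in auto)
    have "(\<integral>\<^sup>+x. f (x, y) \<partial>distr M S (\<lambda>x. x)) = (\<integral>\<^sup>+x. f (x, y) \<partial>M)"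
      by (subst nn_integral_distr[OF idS]) (simp_all add: fy)
    also have "\<dots> \<le> c" by (rule bnd[OF y])
    finally show "(\<integral>\<^sup>+x. f (x, y) \<partial>distr M S (\<lambda>x. x)) \<le> c" .
  qed
  also have "\<dots> = c" using PT.emeasure_space_1 by simp
  finally show ?thesis .
qed

definition aug_sets :: "'a measure \<Rightarrow> 'a measure \<Rightarrow> 'a set set" where
  "aug_sets M T0 = {A \<in> sets M. \<exists>A'\<in>sets T0. \<exists>N\<in>null_sets M. (A - A') \<union> (A' - A) \<subseteq> N}"

lemma aug_sets_Pow: "aug_sets M T0 \<subseteq> Pow (space M)"
  unfolding aug_sets_def using sets.sets_into_space by auto

lemma aug_sets_sub: "sigma_sets (space M) (aug_sets M T0) \<subseteq> sets M"
  by (rule sets.sigma_sets_subset) (auto simp: aug_sets_def)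

lemma aug_Int_stable:
  assumes "sets T0 \<subseteq> sets M"
  shows "Int_stable (aug_sets M T0)"
proof (rule Int_stableI)
  fix A B assume "A \<in> aug_sets M T0" "B \<in> aug_sets M T0"
  then obtain A' NA B' NB where A: "A \<in> sets M" "A' \<in> sets T0" "NA \<in> null_sets M" "(A - A') \<union> (A' - A) \<subseteq> NA"
    and B: "B \<in> sets M" "B' \<in> sets T0" "NB \<in> null_sets M" "(B - B') \<union> (B' - B) \<subseteq> NB"
    unfolding aug_sets_def by blast
  have "A' \<inter> B' \<in> sets T0" using A B by auto
  moreover have "NA \<union> NB \<in> null_sets M" using A B by auto
  moreover have "((A \<inter> B) - (A' \<inter> B')) \<union> ((A' \<inter> B') - (A \<inter> B)) \<subseteq> NA \<union> NB" using A B by blast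
  ultimately show "A \<inter> B \<in> aug_sets M T0" using A B unfolding aug_sets_def by blast
qed

lemma (in prob_space) aug_indep:
  assumes S: "sets S \<subseteq> sets M" "space S = space M"
    and T0: "sets T0 \<subseteq> sets M"
    and ind: "indep_set (sets S) (sets T0)"
  shows "indep_set (sets S) (sigma_sets (space M) (aug_sets M T0))"
proof -
  have "indep_set (sets S) (aug_sets M T0)"
  proof (rule indep_setI)
    show "sets S \<subseteq> events" using S by simp
    show "aug_sets M T0 \<subseteq> events" by (auto simp: aug_sets_def)
    fix a g assume a: "a \<in> sets S" and g: "g \<in> aug_sets M T0"
    then obtain g' N where g': "g \<in> sets M" "g' \<in> sets T0" "N \<in> null_sets M" "(g - g') \<union> (g' - g) \<subseteq> N"
      unfolding aug_sets_def by blast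
    have aM: "a \<in> sets M" using a S by auto
    have g'M: "g' \<in> sets M" using g' T0 by auto
    have AEg: "AE x in M. x \<in> g \<longleftrightarrow> x \<in> g'"
      using AE_not_in[OF g'(3)] by eventually_elim (use g'(4) in blast)
    have p1: "prob (a \<inter> g) = prob (a \<inter> g')"
      by (rule measure_eq_AE) (use AEg aM g' g'M in auto)
    have p2: "prob g = prob g'"
      by (rule measure_eq_AE) (use AEg g' g'M in auto)
    have "prob (a \<inter> g') = prob a * prob g'"
      using indep_setD[OF ind a g'(2)] .
    then show "prob (a \<inter> g) = prob a * prob g" using p1 p2 by simp
  qed
  from indep_set_sigma_sets[OF this]
  have "indep_set (sigma_sets (space M) (sets S)) (sigma_sets (space M) (aug_sets M T0))"
    using aug_Int_stable[OF T0] by (auto simp: Int_stable_def)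
  then show ?thesis using S sets.sigma_sets_eq[of S] by simp
qed

lemma AE_version_meas:
  fixes g h :: "'a \<Rightarrow> 'b::topological_space"
  assumes g: "g \<in> borel_measurable M" and h: "h \<in> borel_measurable T0"
    and T0: "sets T0 \<subseteq> sets M" "space T0 = space M"
    and ae: "AE x in M. g x = h x"
  shows "g \<in> borel_measurable (sigma (space M) (aug_sets M T0))"
proof (rule measurableI)
  fix x assume "x \<in> space (sigma (space M) (aug_sets M T0))" then show "g x \<in> space borel" by simp
next
  fix A :: "'b set" assume A: "A \<in> sets borel"
  obtain N where N: "N \<in> null_sets M" "{x \<in> space M. g x \<noteq> h x} \<subseteq> N"
    using ae by (auto elim!: AE_E)
  have "g -` A \<inter> space M \<in> aug_sets M T0"
    unfolding aug_sets_def
  proof (intro CollectI conjI bexI)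
    show "g -` A \<inter> space M \<in> sets M" using g A by (rule measurable_sets)
    show "h -` A \<inter> space T0 \<in> sets T0" using h A by (rule measurable_sets)
    show "N \<in> null_sets M" by fact
    show "(g -` A \<inter> space M - h -` A \<inter> space T0) \<union> (h -` A \<inter> space T0 - g -` A \<inter> space M) \<subseteq> N"
      using N T0 by auto
  qed
  then show "g -` A \<inter> space (sigma (space M) (aug_sets M T0)) \<in> sets (sigma (space M) (aug_sets M T0))"
    using aug_sets_Pow[of M T0] by (simp add: sets_measure_of)
qed

lemma cont_from_Icc:
  fixes f :: "real \<Rightarrow> 'b::topological_space"
  assumes "\<And>T. T \<ge> 0 \<Longrightarrow> continuous_on {0..T} f"
  shows "continuous_on {0..} f"
  unfolding continuous_on_eq_continuous_within
proof
  fix t :: real assume t: "t \<in> {0..}"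
  have c: "continuous (at t within {0..t+1}) f"
    using assms[of "t+1"] t by (auto simp: continuous_on_eq_continuous_within)
  have "at t within {0..t+1} = at t within {0..}"
    by (rule at_within_nhd[of _ "{..<t+1}"]) (use t in auto)
  then show "continuous (at t within {0..}) f" using c by simp
qed



lemma dir_deriv_seq:
  fixes f :: "'a::real_normed_vector \<Rightarrow> 'b::real_normed_vector"
  assumes fd: "(f has_derivative D) (at x)" and v: "v \<noteq> 0"
  shows "(\<lambda>n. real (Suc n) *\<^sub>R (f (x + v /\<^sub>R real (Suc n)) - f x)) \<longlonglongrightarrow> D v"
proof -
  have bl: "bounded_linear D" using fd by (rule has_derivative_bounded_linear)
  interpret D: bounded_linear D by (rule bl)
  have lim0: "(\<lambda>h. norm (f (x + h) - f x - D h) / norm h) \<midarrow>0\<rightarrow> 0"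
    using fd by (simp add: has_derivative_at)
  define h where "h n = v /\<^sub>R real (Suc n)" for n
  have "h \<longlonglongrightarrow> 0"
    unfolding h_def using tendsto_scaleR[OF LIMSEQ_inverse_real_of_nat tendsto_const, of v]
    by (simp add: divide_inverse_commute)
  moreover have "\<forall>n. h n \<noteq> 0" using v by (simp add: h_def)
  ultimately have "filterlim h (at 0) sequentially"
    by (simp add: filterlim_at)
  from filterlim_compose[OF lim0 this]
  have q: "(\<lambda>n. norm (f (x + h n) - f x - D (h n)) / norm (h n)) \<longlonglongrightarrow> 0" .
  have eq: "norm (real (Suc n) *\<^sub>R (f (x + h n) - f x) - D v) = norm v * (norm (f (x + h n) - f x - D (h n)) / norm (h n))" for n
  proof -
    have Dh: "D (h n) = D v /\<^sub>R real (Suc n)" by (simp add: h_def D.scaleR)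
    have "real (Suc n) *\<^sub>R (f (x + h n) - f x) - D v = real (Suc n) *\<^sub>R (f (x + h n) - f x - D (h n))"
      by (simp add: Dh scaleR_diff_right)
    then have A: "norm (real (Suc n) *\<^sub>R (f (x + h n) - f x) - D v) = real (Suc n) * norm (f (x + h n) - f x - D (h n))"
      by simp
    have hn: "norm (h n) = norm v / real (Suc n)" by (simp add: h_def field_simps)
    have nv: "norm v * (N / norm (h n)) = real (Suc n) * N" for N
      using v by (simp add: hn field_simps del: of_nat_Suc)
    show ?thesis by (simp only: A nv)
  qed
  have "(\<lambda>n. norm (real (Suc n) *\<^sub>R (f (x + h n) - f x) - D v)) \<longlonglongrightarrow> 0"
    unfolding eq using tendsto_mult[OF tendsto_const q, of "norm v"] by simp
  then have "(\<lambda>n. real (Suc n) *\<^sub>R (f (x + h n) - f x) - D v) \<longlonglongrightarrow> 0"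
    by (rule tendsto_norm_zero_cancel)
  then show ?thesis unfolding h_def by (rule LIM_zero_cancel)
qed

lemma C2_has_derivative:
  assumes "C2 f" shows "\<exists>f'. \<forall>x. (f has_derivative blinfun_apply (f' x)) (at x)"
  using assms unfolding C2_def by blast

lemma drift_eval_meas:
  fixes b :: "real \<Rightarrow> 'a::{real_normed_vector,second_countable_topology} \<Rightarrow> 'b::{real_normed_vector,second_countable_topology}"
  assumes "admissible_drift b"
  shows "(\<lambda>p. if fst p \<in> {0..1} then b (fst p) (snd p) else 0) \<in> borel_measurable borel"
proof -
  have m: "(\<lambda>p. b (fst p) (snd p)) \<in> borel_measurable (restrict_space borel ({0..1} \<times> UNIV))"
    using assms unfolding admissible_drift_def by blast
  have "({0..1::real} \<times> (UNIV::'a set)) \<inter> space borel \<in> sets borel"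
    by (simp add: borel_closed closed_Times)
  from measurable_restrict_space_iff[OF this, of 0, THEN iffD1, OF _ m]
  have "(\<lambda>p. if p \<in> {0..1} \<times> UNIV then b (fst p) (snd p) else 0) \<in> borel_measurable borel" by simp
  moreover have "(\<lambda>p::real\<times>'a. if p \<in> {0..1} \<times> UNIV then b (fst p) (snd p) else 0) =
      (\<lambda>p. if fst p \<in> {0..1} then b (fst p) (snd p) else 0)"
    by (auto simp: mem_Times_iff)
  ultimately show ?thesis by simp
qed

lemma drift_deriv_meas:
  fixes b :: "real \<Rightarrow> 'a::{real_normed_vector,second_countable_topology} \<Rightarrow> 'b::{real_normed_vector,second_countable_topology}"
  assumes adm: "admissible_drift b" and v: "v \<noteq> 0"
  shows "(\<lambda>p. if fst p \<in> {0..1} then frechet_derivative (b (fst p)) (at (snd p)) v else 0) \<in> borel_measurable borel"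
proof (rule borel_measurable_LIMSEQ_metric)
  define Bz where "Bz p = (if fst p \<in> {0..1} then b (fst p) (snd p) else 0)" for p :: "real \<times> 'a"
  have Bz[measurable]: "Bz \<in> borel_measurable borel"
    unfolding Bz_def by (rule drift_eval_meas[OF adm])
  define g where "g n p = (if p \<in> {0..1} \<times> UNIV then real (Suc n) *\<^sub>R (Bz (fst p, snd p + v /\<^sub>R real (Suc n)) - Bz p) else 0)" for n p
  show "g n \<in> borel_measurable borel" for n
  proof -
    have m1: "(\<lambda>p. Bz (fst p, snd p + v /\<^sub>R real (Suc n))) \<in> borel_measurable borel"
      by (rule measurable_compose[OF borel_measurable_continuous_onI Bz]) (intro continuous_intros)
    have S: "({0..1::real} \<times> (UNIV::'a set)) \<inter> space borel \<in> sets borel"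
      by (simp add: borel_closed closed_Times)
    show ?thesis unfolding g_def
      by (rule measurable_If_set[OF _ _ S]) (use m1 in measurable)
  qed
  fix p :: "real \<times> 'a"
  show "(\<lambda>n. g n p) \<longlonglongrightarrow> (if fst p \<in> {0..1} then frechet_derivative (b (fst p)) (at (snd p)) v else 0)"
  proof (cases "fst p \<in> {0..1}")
    case True
    then have "C2 (b (fst p))" using adm unfolding admissible_drift_def by blast
    then obtain f' where f': "\<And>x. (b (fst p) has_derivative blinfun_apply (f' x)) (at x)"
      using C2_has_derivative by blast
    have fd: "frechet_derivative (b (fst p)) (at (snd p)) = blinfun_apply (f' (snd p))"
      using frechet_derivative_at[OF f'] by simp
    have "g n p = real (Suc n) *\<^sub>R (b (fst p) (snd p + v /\<^sub>R real (Suc n)) - b (fst p) (snd p))" for n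
      using True by (simp add: g_def Bz_def mem_Times_iff)
    then show ?thesis using True dir_deriv_seq[OF f' v] fd by simp
  next
    case False
    have "g n p = 0" for n using False unfolding g_def mem_Times_iff by auto
    then show ?thesis using False by auto
  qed
qed

lemma C2_affine:
  fixes f :: "'a::real_normed_vector \<Rightarrow> 'b::real_normed_vector"
  assumes "C2 f"
  shows "C2 (\<lambda>y::real. f (y *\<^sub>R v + c))"
proof -
  obtain f' f'' where f': "\<And>x. (f has_derivative blinfun_apply (f' x)) (at x)"
    and f'': "\<And>x. (f' has_derivative blinfun_apply (f'' x)) (at x)"
    and cf'': "continuous_on UNIV f''"
    using assms unfolding C2_def by blast
  define a where "a y = y *\<^sub>R v + c" for y :: real
  have da: "(a has_derivative (\<lambda>h. h *\<^sub>R v)) (at y)" for y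
    unfolding a_def by (auto intro!: derivative_eq_intros)
  define g' where "g' y = blinfun_scaleR_left (f' (a y) v)" for y
  define g'' where "g'' y = blinfun_scaleR_left (blinfun_scaleR_left (f'' (a y) v v))" for y
  have 1: "((\<lambda>y. f (a y)) has_derivative blinfun_apply (g' y)) (at y)" for y
  proof -
    have "((\<lambda>y. f (a y)) has_derivative (\<lambda>h. f' (a y) (h *\<^sub>R v))) (at y)"
      using has_derivative_compose[OF da f', of y] by (simp add: o_def)
    moreover have "(\<lambda>h. f' (a y) (h *\<^sub>R v)) = blinfun_apply (g' y)"
      by (auto simp: g'_def blinfun.scaleR_right)
    ultimately show ?thesis by simp
  qed
  have 2: "(g' has_derivative blinfun_apply (g'' y)) (at y)" for y
  proof -
    have h1: "((\<lambda>y. f' (a y)) has_derivative (\<lambda>h. f'' (a y) (h *\<^sub>R v))) (at y)"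
      using has_derivative_compose[OF da f'', of y] by (simp add: o_def)
    have h2: "((\<lambda>y. blinfun_apply (f' (a y)) v) has_derivative (\<lambda>h. blinfun_apply (f'' (a y) (h *\<^sub>R v)) v)) (at y)"
      using bounded_bilinear.FDERIV[OF bounded_bilinear_blinfun_apply h1 has_derivative_const[of v]]
      by simp
    have h3: "((\<lambda>y. blinfun_scaleR_left (blinfun_apply (f' (a y)) v)) has_derivative
        (\<lambda>h. blinfun_scaleR_left (blinfun_apply (f'' (a y) (h *\<^sub>R v)) v))) (at y)"
      using bounded_linear.has_derivative[OF bounded_linear_blinfun_scaleR_left h2] .
    moreover have "(\<lambda>h. blinfun_scaleR_left (blinfun_apply (f'' (a y) (h *\<^sub>R v)) v)) = blinfun_apply (g'' y)"
      by (auto simp: g''_def blinfun.scaleR_right blinfun.scaleR_left intro!: blinfun_eqI)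
    ultimately show ?thesis unfolding g'_def by simp
  qed
  have 3: "continuous_on UNIV g''"
  proof -
    have ca: "continuous_on UNIV a" unfolding a_def by (intro continuous_intros)
    have "continuous_on UNIV (\<lambda>y. f'' (a y))"
      using continuous_on_compose[OF ca continuous_on_subset[OF cf'']] by (simp add: o_def)
    then show ?thesis unfolding g''_def
      by (intro continuous_intros) auto
  qed
  show ?thesis unfolding C2_def a_def[symmetric]
    using 1 2 3 by blast
qed

lemma frechet_affine:
  fixes f :: "'a::real_normed_vector \<Rightarrow> 'b::real_normed_vector"
  assumes "C2 f"
  shows "frechet_derivative (\<lambda>y::real. f (y *\<^sub>R v + c)) (at y) 1 = frechet_derivative f (at (y *\<^sub>R v + c)) v"
proof -
  obtain f' where f': "\<And>x. (f has_derivative blinfun_apply (f' x)) (at x)"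
    using C2_has_derivative[OF assms] by blast
  have da: "((\<lambda>y. y *\<^sub>R v + c) has_derivative (\<lambda>h. h *\<^sub>R v)) (at y)"
    by (auto intro!: derivative_eq_intros)
  have "((\<lambda>y. f (y *\<^sub>R v + c)) has_derivative (\<lambda>h. f' (y *\<^sub>R v + c) (h *\<^sub>R v))) (at y)"
    using has_derivative_compose[OF da f'] by (simp add: o_def)
  from frechet_derivative_at[OF this] frechet_derivative_at[OF f'[of "y *\<^sub>R v + c"]]
  show ?thesis by (metis scaleR_one)
qed



lemma path_meas:
  fixes B :: "nat \<Rightarrow> real \<Rightarrow> 'w \<Rightarrow> real"
  assumes n: "n \<in> I" and s: "s \<ge> 0"
  shows "(\<lambda>\<omega>. B n s \<omega>) \<in> borel_measurable (vimage_algebra X (\<lambda>\<omega>. restrict (\<lambda>n. restrict (\<lambda>t. B n t \<omega>) {0..}) I) (Pi\<^sub>M I (\<lambda>_. Pi\<^sub>M {0..} (\<lambda>_. borel))))"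
proof -
  let ?U = "\<lambda>\<omega>. restrict (\<lambda>n. restrict (\<lambda>t. B n t \<omega>) {0..}) I"
  let ?V = "vimage_algebra X ?U (Pi\<^sub>M I (\<lambda>_. Pi\<^sub>M {0..} (\<lambda>_. borel :: real measure)))"
  have sp: "?U \<in> X \<rightarrow> space (Pi\<^sub>M I (\<lambda>_. Pi\<^sub>M {0..} (\<lambda>_. borel :: real measure)))"
    by (auto simp: space_PiM)
  have m1: "?U \<in> measurable ?V (Pi\<^sub>M I (\<lambda>_. Pi\<^sub>M {0..} (\<lambda>_. borel :: real measure)))"
    by (rule measurable_vimage_algebra1[OF sp])
  have m2: "(\<lambda>\<omega>. ?U \<omega> n) \<in> measurable ?V (Pi\<^sub>M {0..} (\<lambda>_. borel :: real measure))"
    by (rule measurable_compose[OF m1 measurable_component_singleton[OF n]])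
  have m3: "(\<lambda>\<omega>. ?U \<omega> n s) \<in> borel_measurable ?V"
    by (rule measurable_compose[OF m2 measurable_component_singleton]) (use s in simp)
  moreover have "(\<lambda>\<omega>. ?U \<omega> n s) = (\<lambda>\<omega>. B n s \<omega>)"
    using n s by auto
  ultimately show ?thesis by simp
qed

lemma Zh_meas:
  fixes X :: "real \<Rightarrow> 'a \<Rightarrow> real"
  assumes cont: "\<And>\<omega>. \<omega> \<in> space N \<Longrightarrow> continuous_on {0..} (\<lambda>s. X s \<omega>)"
    and meas: "\<And>s. s \<ge> 0 \<Longrightarrow> X s \<in> borel_measurable N" and t: "t \<ge> 0"
  shows "(\<lambda>\<omega>. X t \<omega> - l * exp (- l * t) * (LINT s:{0..t}|lborel. exp (l * s) * X s \<omega>)) \<in> borel_measurable N"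
proof -
  have c[measurable]: "(\<lambda>p. X (max 0 (snd p)) (fst p)) \<in> borel_measurable (N \<Otimes>\<^sub>M lborel)"
    by (rule carath_measurable[OF cont meas])
  have eq: "(LINT s:{0..t}|lborel. exp (l * s) * X s \<omega>) = (\<integral>s. indicator {0..t} s *\<^sub>R (exp (l * s) * X (max 0 s) \<omega>) \<partial>lborel)" for \<omega>
    unfolding set_lebesgue_integral_def
    by (intro Bochner_Integration.integral_cong refl) (auto simp: indicator_def)
  have cp: "(\<lambda>p. indicator {0..t} (snd p) *\<^sub>R (exp (l * snd p) * X (max 0 (snd p)) (fst p))) \<in> borel_measurable (N \<Otimes>\<^sub>M lborel)"
    by measurable
  have "(\<lambda>\<omega>. \<integral>s. indicator {0..t} s *\<^sub>R (exp (l * s) * X (max 0 s) \<omega>) \<partial>lborel) \<in> borel_measurable N"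
    by (rule lborel.borel_measurable_lebesgue_integral) (use cp in \<open>simp add: case_prod_beta'\<close>)
  moreover have "X t \<in> borel_measurable N" by (rule meas[OF t])
  ultimately show ?thesis unfolding eq by measurable
qed

lemma Zh_cont:
  fixes x :: "real \<Rightarrow> real"
  assumes cont: "continuous_on {0..} x"
  shows "continuous_on {0..} (\<lambda>t. x t - l * exp (- l * t) * (LINT s:{0..t}|lborel. exp (l * s) * x s))"
proof (rule cont_from_Icc)
  fix T :: real assume T: "T \<ge> 0"
  have cg: "continuous_on {0..T} (\<lambda>s. exp (l * s) * x s)"
    by (intro continuous_intros continuous_on_subset[OF cont]) auto
  have cc: "continuous_on {0..T} (\<lambda>t. x t - l * exp (- l * t) * integral {0..t} (\<lambda>s. exp (l * s) * x s))"
    by (intro continuous_intros continuous_on_subset[OF cont] indefinite_integral_continuous_1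
        integrable_continuous_real cg) auto
  have ie: "integral {0..t} (\<lambda>s. exp (l * s) * x s) = (LINT s:{0..t}|lborel. exp (l * s) * x s)"
    if "t \<in> {0..T}" for t
    by (rule lint_Icc_eq_integral[symmetric]) (rule continuous_on_subset[OF cg], use that in auto)
  show "continuous_on {0..T} (\<lambda>t. x t - l * exp (- l * t) * (LINT s:{0..t}|lborel. exp (l * s) * x s))"
    by (rule continuous_on_eq[OF cc]) (simp add: ie)
qed



theorem lemma2p2:
  fixes M :: "'w measure" and F :: "real \<Rightarrow> 'w measure"
    and e :: "nat \<Rightarrow> 'h::{real_inner, banach, second_countable_topology}"
    and lam :: "nat \<Rightarrow> real"
    and B :: "nat \<Rightarrow> real \<Rightarrow> 'w \<Rightarrow> real"
    and Z :: "real \<Rightarrow> 'w \<Rightarrow> 'h"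
    and C :: real and \<alpha> :: "real \<Rightarrow> real"
  assumes prob: "prob_space M"
    and filt: "filtration_on M F" and usual: "usual_conditions M F"
    and onb_orth: "\<And>i j. e i \<bullet> e j = (if i = j then 1 else 0)"
    and onb_total: "closure (span (range e)) = UNIV"
    and lam_pos: "\<And>n. lam n > 0"
    and trace_class: "summable (\<lambda>n. 1 / lam n)"
    and BM: "cyl_BM M F B"
    and OU: "OU_H_solution M F e lam B Z"
    and C_le: "C \<le> 3"
    and alpha_pos: "\<And>l. l > 0 \<Longrightarrow> \<alpha> l > 0"
    and hyp: "\<And>l (N :: 'w measure) G W Y (b :: real \<Rightarrow> real \<Rightarrow> 'h).
       l > 0 \<Longrightarrow> prob_space N \<Longrightarrow> filtration_on N G \<Longrightarrow> std_BM N G W \<Longrightarrow>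
       OU_solution N G l W Y \<Longrightarrow> admissible_drift b \<Longrightarrow>
       (\<integral>\<^sup>+ \<omega>. ennreal (exp (\<alpha> l *
           (norm (LINT t:{0..1}|lborel. frechet_derivative (b t) (at (Y t \<omega>)) 1))\<^sup>2)) \<partial>N)
         \<le> ennreal C"
  shows "\<forall>b :: real \<Rightarrow> 'h \<Rightarrow> 'h. admissible_drift b \<longrightarrow>
           (\<forall>i. (\<integral>\<^sup>+ \<omega>. ennreal (exp (\<alpha> (lam i) *
              (norm (LINT t:{0..1}|lborel. frechet_derivative (b t) (at (Z t \<omega>)) (e i)))\<^sup>2)) \<partial>M)
            \<le> ennreal C)"
proof (intro allI impI)
  fix b :: "real \<Rightarrow> 'h \<Rightarrow> 'h" and i :: nat
  assume adm: "admissible_drift b"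
  interpret prob_space M by (rule prob)
  define M' where "M' = (\<lambda>_::nat. Pi\<^sub>M {0..} (\<lambda>_::real. borel :: real measure))"
  define U where "U I \<omega> = restrict (\<lambda>n. restrict (\<lambda>t. B n t \<omega>) {0..}) I" for I \<omega>
  define S where "S = vimage_algebra (space M) (U {i}) (Pi\<^sub>M {i} M')"
  define T0 where "T0 = vimage_algebra (space M) (U (-{i})) (Pi\<^sub>M (-{i}) M')"
  define T where "T = sigma (space M) (aug_sets M T0)"
  define Zh where "Zh j t \<omega> = B j t \<omega> - lam j * exp (- lam j * t) * (LINT s:{0..t}|lborel. exp (lam j * s) * B j s \<omega>)" for j t \<omega>
  define R where "R t \<omega> = Z t \<omega> - (Z t \<omega> \<bullet> e i) *\<^sub>R e i" for t \<omega>
  define f where "f p = ennreal (exp (\<alpha> (lam i) * (norm (LINT t:{0..1}|lborel. frechet_derivative (b t) (at (Zh i t (fst p) *\<^sub>R e i + R t (snd p))) (e i)))\<^sup>2))" for p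

  have ei: "e i \<noteq> 0" using onb_orth[of i i] by auto
  have BMj: "std_BM M F (B j)" for j using BM by (simp add: cyl_BM_def)
  have Bcont: "\<omega> \<in> space M \<Longrightarrow> continuous_on {0..} (\<lambda>t. B j t \<omega>)" for j \<omega>
    using BMj[of j] by (simp add: std_BM_def)
  have Zcont: "\<omega> \<in> space M \<Longrightarrow> continuous_on {0..} (\<lambda>t. Z t \<omega>)" for \<omega>
    using OU by (simp add: OU_H_solution_def)
  have Zmeas: "t \<ge> 0 \<Longrightarrow> Z t \<in> borel_measurable M" for t
  proof -
    assume t: "t \<ge> 0"
    have "Z t \<in> borel_measurable (F t)" using OU t by (simp add: OU_H_solution_def adapted_def)
    moreover have "subalgebra M (F t)" using filt by (simp add: filtration_on_def)
    ultimately show ?thesis using measurable_from_subalg by blast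
  qed
  have indv: "indep_vars M' (\<lambda>n \<omega>. restrict (\<lambda>t. B n t \<omega>) {0..}) UNIV"
    using BM by (simp add: cyl_BM_def M'_def)
  have iv: "indep_var (Pi\<^sub>M {i} M') (U {i}) (Pi\<^sub>M (-{i}) M') (U (-{i}))"
    using indep_var_restrict[OF indv, of "{i}" "-{i}"] unfolding U_def[abs_def] by simp
  have rvS: "random_variable (Pi\<^sub>M {i} M') (U {i})" and rvT: "random_variable (Pi\<^sub>M (-{i}) M') (U (-{i}))"
    using iv unfolding indep_var_eq by auto
  have Usp: "U I \<in> space M \<rightarrow> space (Pi\<^sub>M I M')" for I
    by (auto simp: U_def M'_def space_PiM)
  have ind0: "indep_set (sets S) (sets T0)"
    using iv unfolding indep_var_eq S_def T0_def sets_vimage_algebra by simp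
  have Ssub: "sets S \<subseteq> sets M" "space S = space M"
    using measurable_sets[OF rvS] by (auto simp: S_def sets_vimage_algebra2[OF Usp])
  have T0sub: "sets T0 \<subseteq> sets M" "space T0 = space M"
    using measurable_sets[OF rvT] by (auto simp: T0_def sets_vimage_algebra2[OF Usp])
  have setsT: "sets T = sigma_sets (space M) (aug_sets M T0)"
    unfolding T_def by (rule sets_measure_of[OF aug_sets_Pow])
  have Tsub: "sets T \<subseteq> sets M" "space T = space M"
    using aug_sets_sub[of M T0] setsT space_measure_of[OF aug_sets_Pow[of M T0]] by (auto simp: T_def)
  have indST: "indep_set (sets S) (sets T)"
    unfolding setsT by (rule aug_indep[OF Ssub T0sub(1) ind0])

  have BmS: "s \<ge> 0 \<Longrightarrow> (\<lambda>\<omega>. B i s \<omega>) \<in> borel_measurable S" for s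
    unfolding S_def U_def M'_def by (rule path_meas) auto
  have BmT0: "j \<noteq> i \<Longrightarrow> s \<ge> 0 \<Longrightarrow> (\<lambda>\<omega>. B j s \<omega>) \<in> borel_measurable T0" for j s
    unfolding T0_def U_def M'_def by (rule path_meas) auto
  have ZhS: "t \<ge> 0 \<Longrightarrow> Zh i t \<in> borel_measurable S" for t
    unfolding Zh_def[abs_def] by (rule Zh_meas[where X="B i"]) (use Bcont Ssub BmS in auto)
  have ZhT0: "j \<noteq> i \<Longrightarrow> t \<ge> 0 \<Longrightarrow> Zh j t \<in> borel_measurable T0" for j t
    unfolding Zh_def[abs_def] by (rule Zh_meas[where X="B j"]) (use Bcont T0sub BmT0 in auto)
  have Zhcont: "\<omega> \<in> space M \<Longrightarrow> continuous_on {0..} (\<lambda>t. Zh j t \<omega>)" for j \<omega>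
    unfolding Zh_def by (rule Zh_cont[OF Bcont])
  have AEZ: "AE \<omega> in M. \<forall>t\<ge>0. Z t \<omega> \<bullet> e j = Zh j t \<omega>" for j
  proof -
    have "AE \<omega> in M. \<forall>t\<ge>0. Z t \<omega> \<bullet> e j = - lam j * (LINT s:{0..t}|lborel. Z s \<omega> \<bullet> e j) + B j t \<omega>"
      using OU by (simp add: OU_H_solution_def)
    then show ?thesis
    proof (rule AE_mp[OF _ AE_I2[OF impI]])
      fix \<omega> assume \<omega>: "\<omega> \<in> space M" and eq: "\<forall>t\<ge>0. Z t \<omega> \<bullet> e j = - lam j * (LINT s:{0..t}|lborel. Z s \<omega> \<bullet> e j) + B j t \<omega>"
      have cz: "continuous_on {0..} (\<lambda>t. Z t \<omega> \<bullet> e j)"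
        by (intro continuous_intros Zcont[OF \<omega>])
      show "\<forall>t\<ge>0. Z t \<omega> \<bullet> e j = Zh j t \<omega>"
        unfolding Zh_def using ode_explicit[OF cz Bcont[OF \<omega>] eq] by blast
    qed
  qed
  have coordT: "j \<noteq> i \<Longrightarrow> t \<ge> 0 \<Longrightarrow> (\<lambda>\<omega>. Z t \<omega> \<bullet> e j) \<in> borel_measurable T" for j t
    unfolding T_def
  proof (rule AE_version_meas[OF _ _ T0sub])
    assume j: "j \<noteq> i" and t: "t \<ge> 0"
    show "(\<lambda>\<omega>. Z t \<omega> \<bullet> e j) \<in> borel_measurable M" using Zmeas[OF t] by measurable
    show "Zh j t \<in> borel_measurable T0" by (rule ZhT0[OF j t])
    show "AE \<omega> in M. Z t \<omega> \<bullet> e j = Zh j t \<omega>" using AEZ[of j] t by auto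
  qed
  have Rcoord: "R t \<omega> \<bullet> e j = (if j = i then 0 else Z t \<omega> \<bullet> e j)" for t \<omega> j
    by (auto simp: R_def inner_diff_left onb_orth)
  have RT: "t \<ge> 0 \<Longrightarrow> R t \<in> borel_measurable T" for t
  proof (rule borel_measurable_LIMSEQ_metric)
    assume t: "t \<ge> 0"
    show "(\<lambda>\<omega>. \<Sum>j<n. (R t \<omega> \<bullet> e j) *\<^sub>R e j) \<in> borel_measurable T" for n
    proof (intro borel_measurable_sum borel_measurable_scaleR borel_measurable_const)
      fix j assume "j \<in> {..<n}"
      show "(\<lambda>\<omega>. R t \<omega> \<bullet> e j) \<in> borel_measurable T"
        by (cases "j = i") (auto simp: Rcoord intro: coordT[OF _ t])
    qed
    show "(\<lambda>n. \<Sum>j<n. (R t \<omega> \<bullet> e j) *\<^sub>R e j) \<longlonglongrightarrow> R t \<omega>" for \<omega>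
      by (rule onb_expansion[OF onb_orth onb_total])
  qed
  have Rcont: "\<omega> \<in> space M \<Longrightarrow> continuous_on {0..} (\<lambda>t. R t \<omega>)" for \<omega>
    unfolding R_def by (intro continuous_intros Zcont)

  have fmeas: "f \<in> borel_measurable (S \<Otimes>\<^sub>M T)"
  proof -
    define X where "X t p = Zh i t (fst p) *\<^sub>R e i + R t (snd p)" for t p
    have Xcont: "p \<in> space (S \<Otimes>\<^sub>M T) \<Longrightarrow> continuous_on {0..} (\<lambda>t. X t p)" for p
      unfolding X_def using Ssub Tsub
      by (intro continuous_intros Zhcont Rcont) (auto simp: space_pair_measure)
    have Xmeas: "t \<ge> 0 \<Longrightarrow> X t \<in> borel_measurable (S \<Otimes>\<^sub>M T)" for t
      unfolding X_def
      by (intro borel_measurable_add borel_measurable_scaleR borel_measurable_const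
          measurable_compose[OF measurable_fst ZhS] measurable_compose[OF measurable_snd RT])
    have cX: "(\<lambda>q. X (max 0 (snd q)) (fst q)) \<in> borel_measurable ((S \<Otimes>\<^sub>M T) \<Otimes>\<^sub>M lborel)"
      by (rule carath_measurable[OF Xcont Xmeas])
    define Dz where "Dz p = (if fst p \<in> {0..1} then frechet_derivative (b (fst p)) (at (snd p)) (e i) else 0)" for p :: "real \<times> 'h"
    have Dzm: "Dz \<in> borel_measurable borel"
      unfolding Dz_def by (rule drift_deriv_meas[OF adm ei])
    have sndm: "snd \<in> borel_measurable ((S \<Otimes>\<^sub>M T) \<Otimes>\<^sub>M lborel)"
      using measurable_snd[of "S \<Otimes>\<^sub>M T" lborel] by simp
    have pm: "(\<lambda>q. (snd q, X (max 0 (snd q)) (fst q))) \<in> measurable ((S \<Otimes>\<^sub>M T) \<Otimes>\<^sub>M lborel) (borel \<Otimes>\<^sub>M borel)"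
      by (rule measurable_Pair[OF sndm cX])
    then have pm': "(\<lambda>q. (snd q, X (max 0 (snd q)) (fst q))) \<in> measurable ((S \<Otimes>\<^sub>M T) \<Otimes>\<^sub>M lborel) (borel :: (real \<times> 'h) measure)"
      by (simp add: borel_prod)
    define G where "G q = indicator {0..1} (snd q) *\<^sub>R Dz (snd q, X (max 0 (snd q)) (fst q))" for q
    have Gm: "G \<in> borel_measurable ((S \<Otimes>\<^sub>M T) \<Otimes>\<^sub>M lborel)"
      unfolding G_def
      by (intro borel_measurable_scaleR measurable_compose[OF pm' Dzm] measurable_compose[OF sndm] borel_measurable_indicator) simp
    have Im: "(\<lambda>p. \<integral>t. G (p, t) \<partial>lborel) \<in> borel_measurable (S \<Otimes>\<^sub>M T)"
      by (rule lborel.borel_measurable_lebesgue_integral) (simp add: Gm)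
    have feq: "f p = ennreal (exp (\<alpha> (lam i) * (norm (\<integral>t. G (p, t) \<partial>lborel))\<^sup>2))" for p
    proof -
      have "(LINT t:{0..1}|lborel. frechet_derivative (b t) (at (Zh i t (fst p) *\<^sub>R e i + R t (snd p))) (e i))
          = (\<integral>t. G (p, t) \<partial>lborel)"
        unfolding set_lebesgue_integral_def G_def
        by (intro Bochner_Integration.integral_cong refl) (auto simp: indicator_def Dz_def X_def)
      then show ?thesis by (simp add: f_def)
    qed
    show ?thesis unfolding feq[abs_def] using Im by measurable
  qed

  have inner: "(\<integral>\<^sup>+x. f (x, y) \<partial>M) \<le> ennreal C" if y: "y \<in> space M" for y
  proof -
    define r where "r t = R t y" for t
    define br where "br t z = b t (z *\<^sub>R e i + r t)" for t z
    have rc: "continuous_on {0..} r" unfolding r_def by (rule Rcont[OF y])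
    have C2b: "t \<in> {0..1} \<Longrightarrow> C2 (b t)" for t using adm by (simp add: admissible_drift_def)
    have adm_br: "admissible_drift br"
      unfolding admissible_drift_def
    proof (intro conjI ballI allI)
      define A where "A = ({0..1} \<times> UNIV :: (real \<times> real) set)"
      define \<phi> where "\<phi> p = (fst p, snd p *\<^sub>R e i + r (fst p))" for p :: "real \<times> real"
      have c1: "continuous_on A (\<lambda>p. r (fst p))"
        by (rule continuous_on_compose2[OF rc continuous_on_fst[OF continuous_on_id]]) (auto simp: A_def)
      have "continuous_on A \<phi>"
        unfolding \<phi>_def by (intro continuous_intros c1)
      then have "\<phi> \<in> borel_measurable (restrict_space borel A)"
        by (rule borel_measurable_continuous_on_restrict)
      then have "\<phi> \<in> measurable (restrict_space borel A) (restrict_space borel ({0..1} \<times> UNIV))"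
        by (rule measurable_restrict_space2[rotated]) (auto simp: \<phi>_def A_def space_restrict_space)
      moreover have "(\<lambda>p. b (fst p) (snd p)) \<in> borel_measurable (restrict_space borel ({0..1::real} \<times> (UNIV :: 'h set)))"
        using adm by (simp add: admissible_drift_def)
      ultimately have "(\<lambda>p. b (fst (\<phi> p)) (snd (\<phi> p))) \<in> borel_measurable (restrict_space borel A)"
        by (rule measurable_compose)
      then show "(\<lambda>p. br (fst p) (snd p)) \<in> borel_measurable (restrict_space borel ({0..1} \<times> UNIV))"
        by (simp add: \<phi>_def br_def A_def)
    next
      fix t :: real assume "t \<in> {0..1}"
      then show "C2 (br t)" unfolding br_def by (intro C2_affine C2b)
    next
      fix t :: real and z :: real assume "t \<in> {0..1}"
      then show "norm (br t z) \<le> 1" using adm by (simp add: admissible_drift_def br_def)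
    qed
    have OUi: "OU_solution M F (lam i) (B i) (\<lambda>t \<omega>. Z t \<omega> \<bullet> e i)"
      unfolding OU_solution_def
    proof (intro conjI ballI)
      show "adapted F (\<lambda>t \<omega>. Z t \<omega> \<bullet> e i)"
        unfolding adapted_def
      proof (intro allI impI)
        fix t :: real assume "0 \<le> t"
        then have "Z t \<in> borel_measurable (F t)" using OU by (simp add: OU_H_solution_def adapted_def)
        then show "(\<lambda>\<omega>. Z t \<omega> \<bullet> e i) \<in> borel_measurable (F t)" by measurable
      qed
      fix \<omega> assume "\<omega> \<in> space M"
      then show "continuous_on {0..} (\<lambda>t. Z t \<omega> \<bullet> e i)" by (intro continuous_intros Zcont)
    next
      show "AE \<omega> in M. \<forall>t\<ge>0. Z t \<omega> \<bullet> e i = - lam i * (LINT s:{0..t}|lborel. Z s \<omega> \<bullet> e i) + B i t \<omega>"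
        using OU by (simp add: OU_H_solution_def)
    qed
    have H: "(\<integral>\<^sup>+ \<omega>. ennreal (exp (\<alpha> (lam i) *
           (norm (LINT t:{0..1}|lborel. frechet_derivative (br t) (at (Z t \<omega> \<bullet> e i)) 1))\<^sup>2)) \<partial>M) \<le> ennreal C"
      by (rule hyp[OF lam_pos prob filt BMj OUi adm_br])
    have "(\<integral>\<^sup>+x. f (x, y) \<partial>M) = (\<integral>\<^sup>+ \<omega>. ennreal (exp (\<alpha> (lam i) *
           (norm (LINT t:{0..1}|lborel. frechet_derivative (br t) (at (Z t \<omega> \<bullet> e i)) 1))\<^sup>2)) \<partial>M)"
    proof (rule nn_integral_cong_AE)
      show "AE x in M. f (x, y) = ennreal (exp (\<alpha> (lam i) *
           (norm (LINT t:{0..1}|lborel. frechet_derivative (br t) (at (Z t x \<bullet> e i)) 1))\<^sup>2))"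
        using AEZ[of i]
      proof eventually_elim
        case (elim \<omega>)
        have "(LINT t:{0..1}|lborel. frechet_derivative (br t) (at (Z t \<omega> \<bullet> e i)) 1) =
              (LINT t:{0..1}|lborel. frechet_derivative (b t) (at (Zh i t \<omega> *\<^sub>R e i + R t y)) (e i))"
        proof (rule set_lebesgue_integral_cong)
          show "\<forall>t. t \<in> {0..1} \<longrightarrow> frechet_derivative (br t) (at (Z t \<omega> \<bullet> e i)) 1 =
              frechet_derivative (b t) (at (Zh i t \<omega> *\<^sub>R e i + R t y)) (e i)"
          proof (intro allI impI)
            fix t :: real assume t: "t \<in> {0..1}"
            have "frechet_derivative (br t) (at (Z t \<omega> \<bullet> e i)) 1 =
                frechet_derivative (b t) (at ((Z t \<omega> \<bullet> e i) *\<^sub>R e i + r t)) (e i)"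
              unfolding br_def by (rule frechet_affine[OF C2b[OF t]])
            then show "frechet_derivative (br t) (at (Z t \<omega> \<bullet> e i)) 1 =
              frechet_derivative (b t) (at (Zh i t \<omega> *\<^sub>R e i + R t y)) (e i)"
              using elim t by (simp add: r_def)
          qed
        qed simp
        then show ?case by (simp add: f_def)
      qed
    qed
    with H show ?thesis by simp
  qed

  have diag: "(\<integral>\<^sup>+x. f (x, x) \<partial>M) \<le> ennreal C"
    by (rule diag_bound[OF Ssub Tsub indST fmeas inner])

  have "(\<integral>\<^sup>+ \<omega>. ennreal (exp (\<alpha> (lam i) *
      (norm (LINT t:{0..1}|lborel. frechet_derivative (b t) (at (Z t \<omega>)) (e i)))\<^sup>2)) \<partial>M) = (\<integral>\<^sup>+x. f (x, x) \<partial>M)"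
  proof (rule nn_integral_cong_AE)
    show "AE \<omega> in M. ennreal (exp (\<alpha> (lam i) *
      (norm (LINT t:{0..1}|lborel. frechet_derivative (b t) (at (Z t \<omega>)) (e i)))\<^sup>2)) = f (\<omega>, \<omega>)"
      using AEZ[of i]
    proof eventually_elim
      case (elim \<omega>)
      have "(LINT t:{0..1}|lborel. frechet_derivative (b t) (at (Z t \<omega>)) (e i)) =
            (LINT t:{0..1}|lborel. frechet_derivative (b t) (at (Zh i t \<omega> *\<^sub>R e i + R t \<omega>)) (e i))"
        by (rule set_lebesgue_integral_cong) (use elim in \<open>auto simp: R_def\<close>)
      then show ?case by (simp add: f_def)
    qed
  qed
  with diag show "(\<integral>\<^sup>+ \<omega>. ennreal (exp (\<alpha> (lam i) *
      (norm (LINT t:{0..1}|lborel. frechet_derivative (b t) (at (Z t \<omega>)) (e i)))\<^sup>2)) \<partial>M) \<le> ennreal C"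
    by simp
qed


end
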